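(* Let $W_1,\dots,W_m\in\mathbb{R}^{n\times n}$ be signed adjacency matrices with $W_k\mathbf{1}=\mathbf{1}$ for all $k$. If for every $k\in\{1,\dots,m\}$ the matrix $W_k$ is eventually stochastic and normal, then $\mathbb{W}=\{W_1,\dots,W_m\}$ is a consensus set for the switched system $\mathbf{x}(t+1)=W_{\sigma(t)}\mathbf{x}(t)$.
   Context: $W_k$ are real matrices (entries of any sign). $W$ is eventually positive if there is $t_0\in\mathbb{Z}_{\ge0}$ with $W^t$ entrywise positive for all integers $t\ge t_0$; eventually stochastic means eventually positive and $W\mathbf{1}=\mathbf{1}$. $W$ is normal if $WW^\top=W^\top W$. A switching signal is any map $\sigma:\mathbb{Z}_{\ge0}\to\{1,\dots,m\}$. $\mathbb{W}$ is a consensus set if for every switching signal and every $\mathbf{x}(0)$ there is $\alpha\in\mathbb{R}$ with $\lim_{t\to\infty}\mathbf{x}(t)=\alpha\mathbf{1}$. *)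

theory Defs
  imports "HOL-Analysis.Analysis"
begin

definition ones :: "real^'n" where "ones = (\<chi> i. 1)"

fun matpow :: "real^'n^'n \<Rightarrow> nat \<Rightarrow> real^'n^'n" where
  "matpow W 0 = mat 1"
| "matpow W (Suc t) = W ** matpow W t"

definition eventually_positive :: "real^'n^'n \<Rightarrow> bool" where
  "eventually_positive W \<longleftrightarrow>
     (\<exists>t0::nat. \<forall>t\<ge>t0. \<forall>i j. (matpow W t) $ i $ j > 0)"

definition eventually_stochastic :: "real^'n^'n \<Rightarrow> bool" where
  "eventually_stochastic W \<longleftrightarrow> eventually_positive W \<and> W *v ones = ones"

definition normal_matrix :: "real^'n^'n \<Rightarrow> bool" where
  "normal_matrix W \<longleftrightarrow> W ** transpose W = transpose W ** W"

fun traj :: "(nat \<Rightarrow> real^'n^'n) \<Rightarrow> (nat \<Rightarrow> nat) \<Rightarrow> real^'n \<Rightarrow> nat \<Rightarrow> real^'n" where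
  "traj W \<sigma> x0 0 = x0"
| "traj W \<sigma> x0 (Suc t) = W (\<sigma> t) *v traj W \<sigma> x0 t"

definition consensus_set :: "nat \<Rightarrow> (nat \<Rightarrow> real^'n^'n) \<Rightarrow> bool" where
  "consensus_set m W \<longleftrightarrow>
     (\<forall>\<sigma> :: nat \<Rightarrow> nat. (\<forall>t. \<sigma> t \<in> {1..m}) \<longrightarrow>
        (\<forall>x0. \<exists>\<alpha>::real. traj W \<sigma> x0 \<longlonglongrightarrow> \<alpha> *\<^sub>R ones))"

end

theory Submission imports Defs begin

lemma inner_mv: "inner (A *v x) y = inner x (transpose A *v (y::real^'n))"
  for A :: "real^'n^'n"
  by (metis dot_lmul_matrix inner_commute transpose_matrix_vector)

lemma normal_norm:
  fixes M :: "real^'n^'n"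
  assumes "normal_matrix M"
  shows "norm (transpose M *v z) = norm (M *v z)"
proof -
  have "(norm (transpose M *v z))^2 = inner z (M *v (transpose M *v z))"
    by (metis inner_mv power2_norm_eq_inner transpose_transpose inner_commute)
  also have "\<dots> = inner z ((M ** transpose M) *v z)" by (simp only: matrix_vector_mul_assoc)
  also have "\<dots> = inner z ((transpose M ** M) *v z)" using assms by (simp add: normal_matrix_def)
  also have "\<dots> = inner z (transpose M *v (M *v z))" by (simp only: matrix_vector_mul_assoc)
  also have "\<dots> = (norm (M *v z))^2" by (metis inner_mv power2_norm_eq_inner)
  finally show ?thesis by (simp add: power2_eq_iff_nonneg)
qed

lemma inner_ones_ones: "inner (ones::real^'n) ones = real CARD('n)"
  by (simp add: ones_def inner_vec_def)

lemma normal_col: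
  fixes M :: "real^'n^'n"
  assumes nm: "normal_matrix M" and r: "M *v ones = ones"
  shows "transpose M *v ones = ones"
proof -
  define v where "v = transpose M *v ones"
  have a: "inner v ones = inner ones (ones::real^'n)"
    unfolding v_def using inner_mv[of "transpose M" ones ones] r by (simp only: transpose_transpose)
  have a': "inner ones v = inner ones (ones::real^'n)" using a by (simp only: inner_commute)
  have nv: "norm v = norm (ones::real^'n)"
    unfolding v_def using normal_norm[OF nm, of ones] r by (simp only:)
  have b: "inner v v = inner ones (ones::real^'n)"
    using nv by (simp only: power2_norm_eq_inner[symmetric])
  have "inner (v - ones) (v - ones) = inner v v - inner v ones - inner ones v + inner ones (ones::real^'n)"
    by (simp add: inner_diff_left inner_diff_right)
  also have "\<dots> = 0" using a a' b by simp
  finally have "v - ones = 0" by simp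
  thus ?thesis unfolding v_def by simp
qed

lemma matpow_comm1:
  fixes A B :: "real^'n^'n"
  assumes "A ** B = B ** A"
  shows "A ** matpow B t = matpow B t ** A"
proof (induction t)
  case 0 then show ?case by simp
next
  case (Suc t)
  have "A ** matpow B (Suc t) = (A ** B) ** matpow B t" by (simp only: matpow.simps matrix_mul_assoc)
  also have "\<dots> = B ** (A ** matpow B t)" by (simp only: assms matrix_mul_assoc)
  also have "\<dots> = matpow B (Suc t) ** A" by (simp only: Suc matpow.simps matrix_mul_assoc)
  finally show ?case .
qed

lemma matpow_comm:
  fixes A B :: "real^'n^'n"
  assumes "A ** B = B ** A"
  shows "matpow A s ** matpow B t = matpow B t ** matpow A s"
proof (induction s)
  case 0 then show ?case by simp
next
  case (Suc s)
  have "matpow A (Suc s) ** matpow B t = A ** (matpow A s ** matpow B t)"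
    by (simp add: matrix_mul_assoc)
  also have "\<dots> = (A ** matpow B t) ** matpow A s" using Suc by (simp add: matrix_mul_assoc)
  also have "\<dots> = matpow B t ** matpow A (Suc s)"
    using matpow_comm1[OF assms] by (simp add: matrix_mul_assoc)
  finally show ?case .
qed

lemma matpow_add: "matpow (A::real^'n^'n) (a + b) = matpow A a ** matpow A b"
  by (induction a) (simp_all add: matrix_mul_assoc)

lemma matpow_transpose: "transpose (matpow (A::real^'n^'n) t) = matpow (transpose A) t"
proof (induction t)
  case 0 then show ?case by simp
next
  case (Suc t)
  have "transpose (matpow A (Suc t)) = matpow (transpose A) t ** transpose A"
    by (simp add: matrix_transpose_mul Suc)
  also have "\<dots> = transpose A ** matpow (transpose A) t"
    using matpow_comm1[of "transpose A" "transpose A" t] by (simp only: refl simp_thms)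
  finally show ?case by (simp only: matpow.simps)
qed

lemma matpow_normal:
  assumes "normal_matrix (A::real^'n^'n)"
  shows "normal_matrix (matpow A t)"
  unfolding normal_matrix_def matpow_transpose
  using matpow_comm[of A "transpose A" t t] assms unfolding normal_matrix_def by blast

lemma matpow_ones: assumes a: "(A::real^'n^'n) *v ones = ones" shows "matpow A t *v ones = ones"
proof (induction t)
  case 0 then show ?case by simp
next
  case (Suc t)
  have "matpow A (Suc t) *v ones = A *v (matpow A t *v ones)"
    by (simp only: matpow.simps matrix_vector_mul_assoc)
  then show ?case using Suc a by (simp only:)
qed

lemma halving:
  fixes M :: "real^'n^'n"
  assumes "normal_matrix M" "norm ((M ** M) *v y) < norm y"
  shows "norm (M *v y) < norm y"
proof -
  have "(norm (M *v y))^2 = inner y (transpose M *v (M *v y))"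
    by (metis inner_mv power2_norm_eq_inner)
  also have "\<dots> \<le> norm y * norm (transpose M *v (M *v y))" by (rule norm_cauchy_schwarz)
  also have "\<dots> = norm y * norm (M *v (M *v y))"
    using normal_norm[OF assms(1), of "M *v y"] by (simp only:)
  also have "\<dots> = norm y * norm ((M ** M) *v y)" by (simp only: matrix_vector_mul_assoc)
  also have "\<dots> < norm y * norm y"
    using assms(2) by (intro mult_strict_left_mono) (auto simp: le_less_trans[OF norm_ge_zero])
  finally have "(norm (M *v y))^2 < (norm y)^2" by (simp add: power2_eq_square)
  thus ?thesis using power_less_imp_less_base by fastforce
qed

lemma pos_contract:
  fixes M :: "real^'n^'n"
  assumes pos: "\<forall>i j. M $ i $ j > 0" and row: "M *v ones = ones"
    and col: "transpose M *v ones = ones"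
    and y: "inner y ones = 0" "y \<noteq> 0"
  shows "norm (M *v y) < norm y"
proof -
  let ?u = "M *v y"
  have rowi: "(\<Sum>j\<in>UNIV. M$i$j) = 1" for i
    using arg_cong[OF row, of "\<lambda>v. v $ i"] by (simp add: matrix_vector_mult_def ones_def)
  have colj: "(\<Sum>i\<in>UNIV. M$i$j) = 1" for j
    using arg_cong[OF col, of "\<lambda>v. v $ j"]
    by (simp add: vector_matrix_mult_def ones_def)
  have ui: "?u $ i = (\<Sum>j\<in>UNIV. M$i$j * y$j)" for i
    by (simp add: matrix_vector_mult_def)
  have per: "(\<Sum>j\<in>UNIV. M$i$j * (y$j - ?u$i)^2) = (\<Sum>j\<in>UNIV. M$i$j * (y$j)^2) - (?u$i)^2" for i
  proof -
    have "(\<Sum>j\<in>UNIV. M$i$j * (y$j - ?u$i)^2)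
       = (\<Sum>j\<in>UNIV. M$i$j * (y$j)^2) - 2 * ?u$i * (\<Sum>j\<in>UNIV. M$i$j * y$j) + (?u$i)^2 * (\<Sum>j\<in>UNIV. M$i$j)"
    proof -
      have "(\<Sum>j\<in>UNIV. M$i$j * (y$j - ?u$i)^2)
         = (\<Sum>j\<in>UNIV. M$i$j * (y$j)^2 - (2 * ?u$i) * (M$i$j * y$j) + (?u$i)^2 * M$i$j)"
        by (rule sum.cong) (simp_all add: power2_eq_square algebra_simps)
      also have "\<dots> = (\<Sum>j\<in>UNIV. M$i$j * (y$j)^2) - (\<Sum>j\<in>UNIV. (2 * ?u$i) * (M$i$j * y$j)) + (\<Sum>j\<in>UNIV. (?u$i)^2 * M$i$j)"
        by (simp only: sum.distrib sum_subtractf)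
      also have "\<dots> = (\<Sum>j\<in>UNIV. M$i$j * (y$j)^2) - 2 * ?u$i * (\<Sum>j\<in>UNIV. M$i$j * y$j) + (?u$i)^2 * (\<Sum>j\<in>UNIV. M$i$j)"
        by (simp only: sum_distrib_left mult.assoc)
      finally show ?thesis .
    qed
    also have "\<dots> = (\<Sum>j\<in>UNIV. M$i$j * (y$j)^2) - (?u$i)^2"
      using rowi[of i] ui[of i] by (simp add: power2_eq_square)
    finally show ?thesis .
  qed
  have tot: "(\<Sum>i\<in>UNIV. \<Sum>j\<in>UNIV. M$i$j * (y$j - ?u$i)^2) = (norm y)^2 - (norm ?u)^2"
  proof -
    have "(\<Sum>i\<in>UNIV. \<Sum>j\<in>UNIV. M$i$j * (y$j - ?u$i)^2)
        = (\<Sum>i\<in>UNIV. \<Sum>j\<in>UNIV. M$i$j * (y$j)^2) - (\<Sum>i\<in>UNIV. (?u$i)^2)"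
      by (simp add: per sum_subtractf)
    also have "(\<Sum>i\<in>UNIV. \<Sum>j\<in>UNIV. M$i$j * (y$j)^2) = (\<Sum>j\<in>UNIV. (\<Sum>i\<in>UNIV. M$i$j) * (y$j)^2)"
      by (subst sum.swap) (simp add: sum_distrib_right)
    also have "\<dots> = (\<Sum>j\<in>UNIV. (y$j)^2)" by (simp add: colj)
    also have "(\<Sum>j\<in>UNIV. (y$j)^2) = (norm y)^2"
      unfolding power2_norm_eq_inner inner_vec_def by (simp add: power2_eq_square)
    also have "(\<Sum>i\<in>UNIV. (?u$i)^2) = (norm ?u)^2"
      unfolding power2_norm_eq_inner inner_vec_def by (simp add: power2_eq_square)
    finally show ?thesis .
  qed
  obtain i0 :: 'n where True by simp
  have nc: "\<exists>j. y$j \<noteq> c" for c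
  proof (rule ccontr)
    assume "\<not> ?thesis"
    hence yc: "y = c *\<^sub>R ones" by (auto simp add: vec_eq_iff ones_def)
    hence "inner y ones = c * real CARD('n)" by (simp add: inner_ones_ones)
    with y(1) have "c = 0" by simp
    with yc y(2) show False by simp
  qed
  have "\<exists>j. y$j \<noteq> ?u$i0" by (rule nc)
  then obtain j0 where j0: "y$j0 \<noteq> ?u$i0" by blast
  have nn: "0 \<le> M$i$j * (y$j - ?u$i)^2" for i j
    using pos by (simp add: less_imp_le)
  have pp: "0 < M$i0$j0 * (y$j0 - ?u$i0)^2"
    using pos j0 by simp
  have "0 < (\<Sum>j\<in>UNIV. M$i0$j * (y$j - ?u$i0)^2)"
    by (rule sum_pos2[of UNIV j0]) (simp_all only: pp nn finite UNIV_I)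
  hence "0 < (\<Sum>i\<in>UNIV. \<Sum>j\<in>UNIV. M$i$j * (y$j - ?u$i)^2)"
    by (rule sum_pos2[OF finite UNIV_I]) (rule sum_nonneg, rule nn)
  with tot have "(norm ?u)^2 < (norm y)^2" by linarith
  thus ?thesis by (rule power_less_imp_less_base) simp
qed

lemma strict_contract:
  fixes W :: "real^'n^'n"
  assumes row: "W *v ones = ones" and es: "eventually_stochastic W" and nm: "normal_matrix W"
    and y: "inner y ones = 0" "y \<noteq> 0"
  shows "norm (W *v y) < norm y"
proof -
  obtain t0 where t0: "\<forall>t\<ge>t0. \<forall>i j. matpow W t $ i $ j > 0"
    using es unfolding eventually_stochastic_def eventually_positive_def by blast
  define P where "P k \<longleftrightarrow> norm (matpow W (2^k) *v y) < norm y" for k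
  have base: "P t0"
  proof -
    have "t0 \<le> 2^t0" using less_exp[of t0] by simp
    hence pos: "\<forall>i j. matpow W (2^t0) $ i $ j > 0" using t0 by blast
    have r: "matpow W (2^t0) *v ones = ones" using matpow_ones[OF row] .
    have c: "transpose (matpow W (2^t0)) *v ones = ones"
      using normal_col[OF matpow_normal[OF nm] r] .
    show ?thesis unfolding P_def using pos_contract[OF pos r c y] .
  qed
  have step: "P k" if "P (Suc k)" for k
  proof -
    have "matpow W (2^k) ** matpow W (2^k) = matpow W (2^Suc k)"
      by (simp add: matpow_add[symmetric] mult_2)
    thus ?thesis using that halving[OF matpow_normal[OF nm], of "2^k" y] unfolding P_def by simp
  qed
  have down: "P (k + d) \<Longrightarrow> P k" for k d
  proof (induction d arbitrary: k)
    case 0 then show ?case by simp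
  next
    case (Suc d)
    then have "P (Suc k + d)" by simp
    then have "P (Suc k)" using Suc.IH by blast
    then show ?case by (rule step)
  qed
  have "P 0" using down[of 0 t0] base by simp
  thus ?thesis unfolding P_def by simp
qed

lemma uniform_contract:
  fixes W :: "real^'n^'n"
  assumes row: "W *v ones = ones" and es: "eventually_stochastic W" and nm: "normal_matrix W"
  shows "\<exists>c. 0 \<le> c \<and> c < 1 \<and> (\<forall>y. inner y ones = 0 \<longrightarrow> norm (W *v y) \<le> c * norm y)"
proof -
  define S where "S = {y::real^'n. inner ones y = 0} \<inter> sphere 0 1"
  have cS: "compact S" unfolding S_def
    by (intro closed_Int_compact closed_hyperplane compact_sphere)
  have inS: "y /\<^sub>R norm y \<in> S" if "inner y ones = 0" "y \<noteq> 0" for y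
    using that by (simp add: S_def inner_commute)
  show ?thesis
  proof (cases "S = {}")
    case True
    show ?thesis
    proof (intro exI[of _ 0] conjI allI impI)
      fix y :: "real^'n" assume "inner y ones = 0"
      then have "y = 0" using True inS by blast
      thus "norm (W *v y) \<le> 0 * norm y" by simp
    qed simp_all
  next
    case False
    have cont: "continuous_on S (\<lambda>y. norm (W *v y))"
      by (intro continuous_on_norm linear_continuous_on matrix_vector_mul_bounded_linear)
    obtain y0 where y0: "y0 \<in> S" and mx: "\<forall>y\<in>S. norm (W *v y) \<le> norm (W *v y0)"
      using continuous_attains_sup[OF cS False cont] by blast
    have y0p: "inner y0 ones = 0" "y0 \<noteq> 0" using y0 by (auto simp: S_def inner_commute)
    have lt: "norm (W *v y0) < 1"
      using strict_contract[OF row es nm y0p] y0 by (simp add: S_def)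
    have bound: "norm (W *v y) \<le> norm (W *v y0) * norm y" if "inner y ones = 0" for y
    proof (cases "y = 0")
      case True then show ?thesis by simp
    next
      case False
      have "norm (W *v (y /\<^sub>R norm y)) \<le> norm (W *v y0)" using mx inS[OF that False] by blast
      moreover have "W *v (y /\<^sub>R norm y) = (1 / norm y) *\<^sub>R (W *v y)"
        by (simp add: matrix_vector_mult_scaleR divide_inverse)
      ultimately have "norm (W *v y) / norm y \<le> norm (W *v y0)" by simp
      thus ?thesis using False by (simp add: divide_le_eq)
    qed
    show ?thesis by (rule exI[of _ "norm (W *v y0)"]) (use lt bound in auto)
  qed
qed

theorem theorem8:
  fixes m :: nat and W :: "nat \<Rightarrow> real^'n^'n"
  assumes row_sums: "\<forall>k\<in>{1..m}. W k *v ones = ones"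
    and ev_stoch: "\<forall>k\<in>{1..m}. eventually_stochastic (W k)"
    and normal: "\<forall>k\<in>{1..m}. normal_matrix (W k)"
  shows "consensus_set m W"
  unfolding consensus_set_def
proof (intro allI impI)
  fix \<sigma> :: "nat \<Rightarrow> nat" and x0 :: "real^'n"
  assume \<sigma>: "\<forall>t. \<sigma> t \<in> {1..m}"
  have "\<forall>k\<in>{1..m}. \<exists>c. 0 \<le> c \<and> c < 1 \<and> (\<forall>y. inner y ones = 0 \<longrightarrow> norm (W k *v y) \<le> c * norm y)"
    using uniform_contract row_sums ev_stoch normal by blast
  then obtain cf where cf: "\<And>k. k \<in> {1..m} \<Longrightarrow> 0 \<le> cf k \<and> cf k < 1 \<and>
      (\<forall>y. inner y ones = 0 \<longrightarrow> norm (W k *v y) \<le> cf k * norm y)"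
    by metis
  have ne: "{1..m} \<noteq> {}" using \<sigma> by blast
  define c where "c = Max (cf ` {1..m})"
  have cle: "cf k \<le> c" if "k \<in> {1..m}" for k
    unfolding c_def using that by (intro Max_ge) auto
  have c1: "c < 1" unfolding c_def using ne cf by (subst Max_less_iff) auto
  have c0: "0 \<le> c" using ne cf cle by (meson all_not_in_conv order_trans)
  define \<alpha> where "\<alpha> = inner x0 ones / real CARD('n)"
  let ?x = "traj W \<sigma> x0"
  define z where "z t = ?x t - \<alpha> *\<^sub>R ones" for t
  have inv: "inner (?x t) ones = inner x0 ones" for t
  proof (induction t)
    case 0 then show ?case by simp
  next
    case (Suc t)
    have k: "\<sigma> t \<in> {1..m}" using \<sigma> by blast
    have "transpose (W (\<sigma> t)) *v ones = ones"
      using normal_col k normal row_sums by blast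
    then show ?case using Suc by (simp only: traj.simps inner_mv)
  qed
  have zperp: "inner (z t) ones = 0" for t
    unfolding z_def \<alpha>_def by (simp add: inner_diff_left inv inner_ones_ones)
  have zstep: "z (Suc t) = W (\<sigma> t) *v z t" for t
  proof -
    have "W (\<sigma> t) *v ones = ones" using \<sigma> row_sums by blast
    thus ?thesis unfolding z_def by (simp add: matrix_vector_mult_diff_distrib matrix_vector_mult_scaleR)
  qed
  have zb: "norm (z t) \<le> c^t * norm (z 0)" for t
  proof (induction t)
    case 0 then show ?case by simp
  next
    case (Suc t)
    have k: "\<sigma> t \<in> {1..m}" using \<sigma> by blast
    have "norm (z (Suc t)) \<le> cf (\<sigma> t) * norm (z t)"
      using cf[OF k] zperp zstep by simp
    also have "\<dots> \<le> c * norm (z t)" using cle[OF k] by (simp add: mult_right_mono)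
    also have "\<dots> \<le> c * (c^t * norm (z 0))" using Suc c0 by (simp add: mult_left_mono)
    finally show ?case by (simp add: mult.assoc)
  qed
  have "(\<lambda>t. c^t * norm (z 0)) \<longlonglongrightarrow> 0"
    using LIMSEQ_power_zero[of c] c0 c1 by (intro tendsto_mult_left_zero) simp
  hence "z \<longlonglongrightarrow> 0"
    by (rule Lim_null_comparison[rotated]) (use zb in simp)
  hence "(\<lambda>t. z t + \<alpha> *\<^sub>R ones) \<longlonglongrightarrow> 0 + \<alpha> *\<^sub>R ones"
    by (intro tendsto_add tendsto_const)
  hence "?x \<longlonglongrightarrow> \<alpha> *\<^sub>R ones" by (simp add: z_def)
  thus "\<exists>\<alpha>. ?x \<longlonglongrightarrow> \<alpha> *\<^sub>R ones" by blast
qed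

end
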